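(* Let $X$ be a finite simplicial complex, $d\ge 0$, $K_d$ an anti-coloring of $X_d$, and $\Delta_{K_d}\subseteq C_d(X)$ the corresponding anti-synchrony subspace. Fix partitions $\mathcal{P}$ of $X_{d+1}$ and $\mathcal{Q}$ of $X_{d-1}$. Then: (1) $\Delta_{K_d}$ is invariant under $B_{d+1}FB_{d+1}^\intercal$ for all $F\in\mathcal{W}^{d+1}_{\mathcal P}$ if and only if $K_d$ is up-balanced with respect to $\mathcal{P}$; (2) $\Delta_{K_d}$ is invariant under $B_d^\intercal HB_d$ for all $H\in\mathcal{W}^{d-1}_{\mathcal Q}$ if and only if $K_d$ is down-balanced with respect to $\mathcal{Q}$.
   Context: A finite simplicial complex $X$ on vertex set $\{1,\dots,n\}$ is a collection of nonempty subsets closed under taking nonempty subsets; $X_d$ is the set of simplices with $d+1$ vertices; a $d$-simplex with vertices $i_0<\dots<i_d$ is written $[i_0,\dots,i_d]$. $C_d(X)$ is the real vector space with basis $X_d$ (coordinates $x_s$, $s\in X_d$) and inner product making $X_d$ orthonormal ($C_{-1}(X)=0$). The boundary map is $\partial_d[i_0,\dots,i_d]=\sum_{k=0}^d(-1)^k[i_0,\dots,\widehat{i_k},\dots,i_d]$ with matrix $B_d$. For $t\in X_{D}$, $e\in X_{D-1}$, $I^t_e\in\{0,1,-1\}$ is the coefficient of $e$ in $\partial_D t$ (so $I_e^t=(B_D)_{et}$). For a partition $\mathcal P=(P_1,\dots,P_k)$ of $X_D$, $\mathcal{W}^D_{\mathcal P}$ is the set of maps $F:C_D(X)\to C_D(X)$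 with $(F(x))_s=F_s(x_s)$ for odd functions $F_s:\mathbb{R}\to\mathbb{R}$ such that $F_s=F_t$ whenever $s,t$ lie in the same class $P_i$. Let $\mathcal K$ be a finite set of colors, $\mathbb{Z}\mathcal K$ the free $\mathbb{Z}$-module with basis $\mathcal K$, and $\mathbf B_{\mathcal K}=\{k,-k:k\in\mathcal K\}\cup\{0\}\subseteq\mathbb{Z}\mathcal K$. An anti-coloring of $X_d$ is a map $K_d:X_d\to\mathbf B_{\mathcal K}$. Its anti-synchrony space is $\Delta_{K_d}=\{x\in C_d(X): x_s=x_t \text{ if } K_d(s)=K_d(t),\ x_s=-x_t \text{ if } K_d(s)=-K_d(t)\}$ (so $x_s=0$ if $K_d(s)=0$). Induced colorings: $K_d^{\uparrow}:X_{d+1}\to\mathbb{Z}\mathcal K$, $K_d^{\uparrow}(t)=\sum_{e\in X_d}I^t_eK_d(e)$, and $K_d^{\downarrow}:X_{d-1}\to\mathbb{Z}\mathcal K$, $K_d^{\downarrow}(v)=\sum_{e\in X_d}I^e_vK_d(e)$. For a partition $\mathcal P=(P_1,\dots,P_k)$ of $X_{d+1}$, $e\in X_d$, a class $P_i$ and $a\in\mathbb{Z}\mathcal K$, put $U_i^a(e)=\sum_{t\in P_i,\,K^{\uparrow}_d(t)=a}I^t_e-\sum_{t\in P_i,\,K^{\uparrow}_d(t)=-a}I^t_e$. $K_d$ is up-balanced with respect to $\mathcal P$ if for all $e,f\in X_d$, all classes $P_i$ and all $a\in\mathbb{Z}\mathcal K$: $U_i^a(e)=U_i^a(f)$ whenever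 $K_d(e)=K_d(f)$, and $U_i^a(e)=-U_i^a(f)$ whenever $K_d(e)=-K_d(f)$. For a partition $\mathcal Q=(Q_1,\dots,Q_l)$ of $X_{d-1}$, put $D_j^a(e)=\sum_{v\in Q_j,\,K^{\downarrow}_d(v)=a}I^e_v-\sum_{v\in Q_j,\,K^{\downarrow}_d(v)=-a}I^e_v$. $K_d$ is down-balanced with respect to $\mathcal Q$ if for all $e,f\in X_d$, all classes $Q_j$ and all $a\in\mathbb{Z}\mathcal K$: $D_j^a(e)=D_j^a(f)$ whenever $K_d(e)=K_d(f)$, and $D_j^a(e)=-D_j^a(f)$ whenever $K_d(e)=-K_d(f)$. A subspace $W$ is invariant under a map $G$ if $G(W)\subseteq W$. *)

theory Defs
  imports Complex_Main
begin

text \<open>Simplices are represented as finite sets of vertices (natural numbers);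
  a d-simplex is a simplex with d+1 vertices.  Chains in C_d(X) are functions
  on simplices that vanish outside X_d.\<close>

definition simplicial_complex :: "nat \<Rightarrow> nat set set \<Rightarrow> bool" where
  "simplicial_complex n X \<longleftrightarrow>
     (\<forall>s\<in>X. s \<noteq> {} \<and> s \<subseteq> {1..n}) \<and>
     (\<forall>s\<in>X. \<forall>r. r \<noteq> {} \<and> r \<subseteq> s \<longrightarrow> r \<in> X)"

text \<open>simplices of X with exactly k vertices; X_d = faces X (d+1), X_{d-1} = faces X d\<close>
definition faces :: "nat set set \<Rightarrow> nat \<Rightarrow> nat set set" where
  "faces X k = {s \<in> X. card s = k}"

text \<open>Incidence coefficient I^t_e: coefficient of e in the boundary of t
  (vertices ordered increasingly, removing the vertex at position k gives sign (-1)^k)\<close>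
definition incid :: "nat set \<Rightarrow> nat set \<Rightarrow> int" where
  "incid t e = (if e \<subseteq> t \<and> card t = card e + 1
                then (-1) ^ card {u \<in> t. u < the_elem (t - e)} else 0)"

text \<open>chain space C_k(X) for simplices with k vertices\<close>
definition chains :: "nat set set \<Rightarrow> nat \<Rightarrow> (nat set \<Rightarrow> real) set" where
  "chains X k = {x. \<forall>s. s \<notin> faces X k \<longrightarrow> x s = 0}"

definition is_partition :: "'a set set \<Rightarrow> 'a set \<Rightarrow> bool" where
  "is_partition P S \<longleftrightarrow> (\<forall>A\<in>P. A \<noteq> {}) \<and> \<Union>P = S \<and>
     (\<forall>A\<in>P. \<forall>B\<in>P. A \<noteq> B \<longrightarrow> A \<inter> B = {})"

text \<open>The family of componentwise odd maps (Fs s) on C_D with Fs constant on classes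
  of the partition P of the simplices with k vertices (here k = D+1).\<close>
definition W_maps :: "nat set set \<Rightarrow> nat \<Rightarrow> nat set set set \<Rightarrow> (nat set \<Rightarrow> real \<Rightarrow> real) set" where
  "W_maps X k P = {Fs. (\<forall>s\<in>faces X k. \<forall>u. Fs s (- u) = - Fs s u) \<and>
                        (\<forall>A\<in>P. \<forall>s\<in>A. \<forall>t\<in>A. Fs s = Fs t)}"

text \<open>B_{d+1} F B_{d+1}^T acting on C_d (k = d+1 vertices)\<close>
definition up_op :: "nat set set \<Rightarrow> nat \<Rightarrow> (nat set \<Rightarrow> real \<Rightarrow> real) \<Rightarrow> (nat set \<Rightarrow> real) \<Rightarrow> (nat set \<Rightarrow> real)" where
  "up_op X k Fs x = (\<lambda>e. if e \<in> faces X k then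
      (\<Sum>t\<in>faces X (Suc k). of_int (incid t e) * Fs t (\<Sum>f\<in>faces X k. of_int (incid t f) * x f))
      else 0)"

text \<open>B_d^T H B_d acting on C_d (k = d+1 vertices; faces X (k-1) = X_{d-1})\<close>
definition down_op :: "nat set set \<Rightarrow> nat \<Rightarrow> (nat set \<Rightarrow> real \<Rightarrow> real) \<Rightarrow> (nat set \<Rightarrow> real) \<Rightarrow> (nat set \<Rightarrow> real)" where
  "down_op X k H x = (\<lambda>e. if e \<in> faces X k then
      (\<Sum>v\<in>faces X (k - 1). of_int (incid e v) * H v (\<Sum>f\<in>faces X k. of_int (incid f v) * x f))
      else 0)"

text \<open>Elements of the free Z-module Z\<K> are functions 'k \<Rightarrow> int.\<close>
definition basis_col :: "'k \<Rightarrow> 'k \<Rightarrow> int" where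
  "basis_col c = (\<lambda>j. if j = c then 1 else 0)"

definition Bcol :: "'k set \<Rightarrow> ('k \<Rightarrow> int) set" where
  "Bcol Ks = {basis_col c | c. c \<in> Ks} \<union> {(\<lambda>j. - basis_col c j) | c. c \<in> Ks} \<union> {(\<lambda>j. 0)}"

definition anti_coloring :: "nat set set \<Rightarrow> nat \<Rightarrow> 'k set \<Rightarrow> (nat set \<Rightarrow> 'k \<Rightarrow> int) \<Rightarrow> bool" where
  "anti_coloring X k Ks K \<longleftrightarrow> (\<forall>s\<in>faces X k. K s \<in> Bcol Ks)"

definition anti_sync :: "nat set set \<Rightarrow> nat \<Rightarrow> (nat set \<Rightarrow> 'k \<Rightarrow> int) \<Rightarrow> (nat set \<Rightarrow> real) set" where
  "anti_sync X k K = {x \<in> chains X k. \<forall>s\<in>faces X k. \<forall>t\<in>faces X k.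
       (K s = K t \<longrightarrow> x s = x t) \<and> (K s = (\<lambda>j. - K t j) \<longrightarrow> x s = - x t)}"

definition invariant :: "('a set) \<Rightarrow> ('a \<Rightarrow> 'a) \<Rightarrow> bool" where
  "invariant W G \<longleftrightarrow> G ` W \<subseteq> W"

definition col_up :: "nat set set \<Rightarrow> nat \<Rightarrow> (nat set \<Rightarrow> 'k \<Rightarrow> int) \<Rightarrow> nat set \<Rightarrow> 'k \<Rightarrow> int" where
  "col_up X k K t = (\<lambda>j. \<Sum>e\<in>faces X k. incid t e * K e j)"

definition col_down :: "nat set set \<Rightarrow> nat \<Rightarrow> (nat set \<Rightarrow> 'k \<Rightarrow> int) \<Rightarrow> nat set \<Rightarrow> 'k \<Rightarrow> int" where
  "col_down X k K v = (\<lambda>j. \<Sum>e\<in>faces X k. incid e v * K e j)"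

definition U_cnt :: "nat set set \<Rightarrow> nat \<Rightarrow> (nat set \<Rightarrow> 'k \<Rightarrow> int) \<Rightarrow> nat set set \<Rightarrow> ('k \<Rightarrow> int) \<Rightarrow> nat set \<Rightarrow> int" where
  "U_cnt X k K Pi a e =
     (\<Sum>t\<in>{t\<in>Pi. col_up X k K t = a}. incid t e) -
     (\<Sum>t\<in>{t\<in>Pi. col_up X k K t = (\<lambda>j. - a j)}. incid t e)"

definition D_cnt :: "nat set set \<Rightarrow> nat \<Rightarrow> (nat set \<Rightarrow> 'k \<Rightarrow> int) \<Rightarrow> nat set set \<Rightarrow> ('k \<Rightarrow> int) \<Rightarrow> nat set \<Rightarrow> int" where
  "D_cnt X k K Qj a e =
     (\<Sum>v\<in>{v\<in>Qj. col_down X k K v = a}. incid e v) -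
     (\<Sum>v\<in>{v\<in>Qj. col_down X k K v = (\<lambda>j. - a j)}. incid e v)"

definition up_balanced :: "nat set set \<Rightarrow> nat \<Rightarrow> (nat set \<Rightarrow> 'k \<Rightarrow> int) \<Rightarrow> nat set set set \<Rightarrow> bool" where
  "up_balanced X k K P \<longleftrightarrow> (\<forall>e\<in>faces X k. \<forall>f\<in>faces X k. \<forall>Pi\<in>P. \<forall>a.
     (K e = K f \<longrightarrow> U_cnt X k K Pi a e = U_cnt X k K Pi a f) \<and>
     (K e = (\<lambda>j. - K f j) \<longrightarrow> U_cnt X k K Pi a e = - U_cnt X k K Pi a f))"

definition down_balanced :: "nat set set \<Rightarrow> nat \<Rightarrow> (nat set \<Rightarrow> 'k \<Rightarrow> int) \<Rightarrow> nat set set set \<Rightarrow> bool" where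
  "down_balanced X k K Q \<longleftrightarrow> (\<forall>e\<in>faces X k. \<forall>f\<in>faces X k. \<forall>Qj\<in>Q. \<forall>a.
     (K e = K f \<longrightarrow> D_cnt X k K Qj a e = D_cnt X k K Qj a f) \<and>
     (K e = (\<lambda>j. - K f j) \<longrightarrow> D_cnt X k K Qj a e = - D_cnt X k K Qj a f))"

end

theory Submission imports Defs "HOL-Computational_Algebra.Polynomial" begin

lemma exists_sep:
  fixes S :: "('k \<Rightarrow> int) set" and Ks :: "'k set"
  assumes fK: "finite Ks" and fS: "finite S" and supp: "\<forall>a\<in>S. \<forall>j. j \<notin> Ks \<longrightarrow> a j = 0"
  shows "\<exists>y::'k\<Rightarrow>real. \<forall>a\<in>S. \<forall>b\<in>S.
     (\<Sum>j\<in>Ks. of_int (a j) * y j) = (\<Sum>j\<in>Ks. of_int (b j) * y j) \<longrightarrow> a = b"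
proof -
  obtain ix :: "'k \<Rightarrow> nat" and m where ix: "inj_on ix Ks"
    using finite_imp_inj_to_nat_seg[OF fK] by blast
  define pd where "pd = (\<lambda>d::'k\<Rightarrow>int. \<Sum>j\<in>Ks. monom (of_int (d j) :: real) (ix j))"
  have pd_nz: "pd (\<lambda>j. a j - b j) \<noteq> 0" if "a \<in> S" "b \<in> S" "a \<noteq> b" for a b
  proof -
    obtain j0 where j0: "a j0 \<noteq> b j0" using \<open>a \<noteq> b\<close> by auto
    then have j0K: "j0 \<in> Ks" using supp that by metis
    have "coeff (pd (\<lambda>j. a j - b j)) (ix j0) = (\<Sum>j\<in>Ks. if j = j0 then of_int (a j - b j) else 0)"
      unfolding pd_def coeff_sum coeff_monom
      apply (rule sum.cong[OF refl])
      using ix j0K by (auto simp: inj_on_def)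
    also have "\<dots> = of_int (a j0 - b j0)" using fK j0K by simp
    finally show ?thesis using j0 by auto
  qed
  define Bad where "Bad = (\<Union>(a,b)\<in>{(a,b). a \<in> S \<and> b \<in> S \<and> a \<noteq> b}. {s. poly (pd (\<lambda>j. a j - b j)) s = 0})"
  have "finite {(a,b). a \<in> S \<and> b \<in> S \<and> a \<noteq> b}"
    by (rule finite_subset[of _ "S \<times> S"]) (use fS in auto)
  then have "finite Bad" unfolding Bad_def using pd_nz poly_roots_finite by auto
  then obtain s :: real where s: "s \<notin> Bad" using ex_new_if_finite[of Bad] infinite_UNIV_char_0 by blast
  show ?thesis
  proof (intro exI[of _ "\<lambda>j. s ^ ix j"] ballI impI)
    fix a b assume ab: "a \<in> S" "b \<in> S"
      and eq: "(\<Sum>j\<in>Ks. of_int (a j) * s ^ ix j) = (\<Sum>j\<in>Ks. of_int (b j) * s ^ ix j)"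
    have "poly (pd (\<lambda>j. a j - b j)) s = (\<Sum>j\<in>Ks. of_int (a j) * s ^ ix j) - (\<Sum>j\<in>Ks. of_int (b j) * s ^ ix j)"
      unfolding pd_def poly_sum poly_monom sum_subtractf[symmetric]
      by (simp add: algebra_simps)
    then have "poly (pd (\<lambda>j. a j - b j)) s = 0" using eq by simp
    then show "a = b" using s ab unfolding Bad_def by auto
  qed
qed




definition gsync :: "nat set set \<Rightarrow> (nat set \<Rightarrow> 'k \<Rightarrow> int) \<Rightarrow> (nat set \<Rightarrow> real) set" where
  "gsync Fc K = {x. (\<forall>s. s \<notin> Fc \<longrightarrow> x s = 0) \<and> (\<forall>s\<in>Fc. \<forall>t\<in>Fc.
       (K s = K t \<longrightarrow> x s = x t) \<and> (K s = (\<lambda>j. - K t j) \<longrightarrow> x s = - x t))}"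

definition gcol :: "nat set set \<Rightarrow> (nat set \<Rightarrow> nat set \<Rightarrow> int) \<Rightarrow> (nat set \<Rightarrow> 'k \<Rightarrow> int) \<Rightarrow> nat set \<Rightarrow> 'k \<Rightarrow> int" where
  "gcol Fc c K t = (\<lambda>j. \<Sum>e\<in>Fc. c e t * K e j)"

definition gop :: "nat set set \<Rightarrow> nat set set \<Rightarrow> (nat set \<Rightarrow> nat set \<Rightarrow> int) \<Rightarrow> (nat set \<Rightarrow> real \<Rightarrow> real) \<Rightarrow> (nat set \<Rightarrow> real) \<Rightarrow> nat set \<Rightarrow> real" where
  "gop Fc T c Fs x = (\<lambda>e. if e \<in> Fc then
      (\<Sum>t\<in>T. of_int (c e t) * Fs t (\<Sum>f\<in>Fc. of_int (c f t) * x f)) else 0)"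

definition gcnt :: "nat set set \<Rightarrow> (nat set \<Rightarrow> nat set \<Rightarrow> int) \<Rightarrow> (nat set \<Rightarrow> 'k \<Rightarrow> int) \<Rightarrow> nat set set \<Rightarrow> ('k \<Rightarrow> int) \<Rightarrow> nat set \<Rightarrow> int" where
  "gcnt Fc c K A a e = (\<Sum>t\<in>{t\<in>A. gcol Fc c K t = a}. c e t) - (\<Sum>t\<in>{t\<in>A. gcol Fc c K t = (\<lambda>j. - a j)}. c e t)"

definition gbal :: "nat set set \<Rightarrow> (nat set \<Rightarrow> nat set \<Rightarrow> int) \<Rightarrow> (nat set \<Rightarrow> 'k \<Rightarrow> int) \<Rightarrow> nat set set set \<Rightarrow> bool" where
  "gbal Fc c K P \<longleftrightarrow> (\<forall>e\<in>Fc. \<forall>f\<in>Fc. \<forall>A\<in>P. \<forall>a.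
     (K e = K f \<longrightarrow> gcnt Fc c K A a e = gcnt Fc c K A a f) \<and>
     (K e = (\<lambda>j. - K f j) \<longrightarrow> gcnt Fc c K A a e = - gcnt Fc c K A a f))"

definition gW :: "nat set set \<Rightarrow> nat set set set \<Rightarrow> (nat set \<Rightarrow> real \<Rightarrow> real) set" where
  "gW T P = {Fs. (\<forall>s\<in>T. \<forall>u. Fs s (- u) = - Fs s u) \<and> (\<forall>A\<in>P. \<forall>s\<in>A. \<forall>t\<in>A. Fs s = Fs t)}"

lemma Bcol_cases: "v \<in> Bcol Ks \<Longrightarrow> (\<exists>c\<in>Ks. v = basis_col c) \<or> (\<exists>c\<in>Ks. v = (\<lambda>j. - basis_col c j)) \<or> v = (\<lambda>j. 0)"
  by (auto simp: Bcol_def)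

lemma Bcol_supp: "v \<in> Bcol Ks \<Longrightarrow> j \<notin> Ks \<Longrightarrow> v j = 0"
  by (auto simp: Bcol_def basis_col_def)

lemma sum_basis: "finite Ks \<Longrightarrow> c \<in> Ks \<Longrightarrow> (\<Sum>j\<in>Ks. of_int (basis_col c j) * (y j::real)) = y c"
  proof -
  assume "finite Ks" "c \<in> Ks"
  have "(\<Sum>j\<in>Ks. of_int (basis_col c j) * (y j::real)) = (\<Sum>j\<in>Ks. if j = c then y j else 0)"
    by (rule sum.cong) (auto simp: basis_col_def)
  then show ?thesis using \<open>finite Ks\<close> \<open>c \<in> Ks\<close> by simp
qed

lemma rep:
  assumes x: "x \<in> gsync Fc K" and KB: "\<forall>f\<in>Fc. K f \<in> Bcol Ks" and fK: "finite Ks"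
  shows "\<exists>y. \<forall>f\<in>Fc. x f = (\<Sum>j\<in>Ks. of_int (K f j) * y j)"
proof -
  define y where "y = (\<lambda>c. if \<exists>f\<in>Fc. K f = basis_col c then x (SOME f. f\<in>Fc \<and> K f = basis_col c)
     else if \<exists>f\<in>Fc. K f = (\<lambda>j. - basis_col c j) then - x (SOME f. f\<in>Fc \<and> K f = (\<lambda>j. - basis_col c j)) else 0)"
  have xs: "\<And>s t. s \<in> Fc \<Longrightarrow> t \<in> Fc \<Longrightarrow> K s = K t \<Longrightarrow> x s = x t"
       "\<And>s t. s \<in> Fc \<Longrightarrow> t \<in> Fc \<Longrightarrow> K s = (\<lambda>j. - K t j) \<Longrightarrow> x s = - x t"
    using x unfolding gsync_def by blast+
  have "x f = (\<Sum>j\<in>Ks. of_int (K f j) * y j)" if f: "f \<in> Fc" for f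
  proof -
    consider (p) c where "c \<in> Ks" "K f = basis_col c" | (m) c where "c \<in> Ks" "K f = (\<lambda>j. - basis_col c j)"
      | (z) "K f = (\<lambda>j. 0)" using Bcol_cases KB f by blast
    then show ?thesis
    proof cases
      case p
      have ex: "\<exists>g. g\<in>Fc \<and> K g = basis_col c" using p f by blast
      have ex': "\<exists>g\<in>Fc. K g = basis_col c" using p f by blast
      have "y c = x (SOME g. g\<in>Fc \<and> K g = basis_col c)"
        unfolding y_def by (rule if_P[OF ex'])
      also have "\<dots> = x f"
      proof -
        define g where "g = (SOME g. g\<in>Fc \<and> K g = basis_col c)"
        from someI_ex[OF ex] have g: "g \<in> Fc" "K g = basis_col c" unfolding g_def by blast+
        have "K g = K f" using p g by simp
        from xs(1)[OF g(1) f this] show ?thesis unfolding g_def .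
      qed
      finally have "y c = x f" .
      then show ?thesis using p fK sum_basis[of Ks c y] by simp
    next
      case m
      have "(\<Sum>j\<in>Ks. of_int (K f j) * y j) = - (\<Sum>j\<in>Ks. of_int (basis_col c j) * y j)"
        using m by (simp add: sum_negf[symmetric])
      also have "\<dots> = - y c" using m fK sum_basis[of Ks c y] by simp
      also have "y c = - x f"
      proof (cases "\<exists>g\<in>Fc. K g = basis_col c")
        case True
        then have ex: "\<exists>g. g\<in>Fc \<and> K g = basis_col c" by blast
        define g where "g = (SOME g. g\<in>Fc \<and> K g = basis_col c)"
        from someI_ex[OF ex] have g: "g \<in> Fc" "K g = basis_col c" unfolding g_def by blast+
        have "K f = (\<lambda>j. - K g j)" using m g by simp
        from xs(2)[OF f g(1) this] have "x f = - x (SOME g. g\<in>Fc \<and> K g = basis_col c)"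
          unfolding g_def .
        moreover have "y c = x (SOME g. g\<in>Fc \<and> K g = basis_col c)"
          unfolding y_def by (rule if_P[OF True])
        ultimately show ?thesis by simp
      next
        case False
        have ex: "\<exists>g. g\<in>Fc \<and> K g = (\<lambda>j. - basis_col c j)" using m f by blast
        define g where "g = (SOME g. g\<in>Fc \<and> K g = (\<lambda>j. - basis_col c j))"
        from someI_ex[OF ex] have g: "g \<in> Fc" "K g = (\<lambda>j. - basis_col c j)" unfolding g_def by blast+
        have "K f = K g" using m g by simp
        from xs(1)[OF f g(1) this] have "x f = x (SOME g. g\<in>Fc \<and> K g = (\<lambda>j. - basis_col c j))"
          unfolding g_def .
        moreover have ex': "\<exists>g\<in>Fc. K g = (\<lambda>j. - basis_col c j)" using m f by blast
        moreover have "y c = - x (SOME g. g\<in>Fc \<and> K g = (\<lambda>j. - basis_col c j))"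
          unfolding y_def by (simp only: if_not_P[OF False] if_P[OF ex'])
        ultimately show ?thesis by simp
      qed
      finally show ?thesis by simp
    next
      case z
      have "x f = - x f" using xs(2)[OF f f] z by simp
      then show ?thesis using z by simp
    qed
  qed
  then show ?thesis by blast
qed



lemma lin:
  assumes "\<forall>f\<in>Fc. x f = (\<Sum>j\<in>Ks. of_int (K f j) * y j)"
  shows "(\<Sum>f\<in>Fc. of_int (c f t) * x f) = (\<Sum>j\<in>Ks. of_int (gcol Fc c K t j) * (y j::real))"
proof -
  have "(\<Sum>f\<in>Fc. of_int (c f t) * x f) = (\<Sum>f\<in>Fc. \<Sum>j\<in>Ks. of_int (c f t) * of_int (K f j) * y j)"
  proof -
    have "(\<Sum>f\<in>Fc. of_int (c f t) * x f) = (\<Sum>f\<in>Fc. of_int (c f t) * (\<Sum>j\<in>Ks. of_int (K f j) * y j))"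
      by (rule sum.cong) (use assms in auto)
    then show ?thesis by (simp add: sum_distrib_left mult.assoc)
  qed
  also have "\<dots> = (\<Sum>j\<in>Ks. \<Sum>f\<in>Fc. of_int (c f t) * of_int (K f j) * y j)" by (rule sum.swap)
  also have "\<dots> = (\<Sum>j\<in>Ks. of_int (gcol Fc c K t j) * (y j::real))"
    by (simp add: gcol_def of_int_sum sum_distrib_right)
  finally show ?thesis .
qed

lemma sym_sum:
  fixes g :: "'t \<Rightarrow> 'k \<Rightarrow> int" and G :: "real \<Rightarrow> real" and L :: "('k\<Rightarrow>int) \<Rightarrow> real" and w :: "'t \<Rightarrow> int"
  assumes fA: "finite A" and fW: "finite W" and gA: "g ` A \<subseteq> W" and Wsym: "(\<lambda>a j. - a j) ` W \<subseteq> W"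
    and Godd: "\<forall>u. G (-u) = - G u" and Lodd: "\<forall>a. L (\<lambda>j. - a j) = - L a"
  shows "2 * (\<Sum>t\<in>A. of_int (w t) * G (L (g t))) =
    (\<Sum>a\<in>W. of_int ((\<Sum>t\<in>{t\<in>A. g t = a}. w t) - (\<Sum>t\<in>{t\<in>A. g t = (\<lambda>j. - a j)}. w t)) * G (L a))"
proof -
  define N where "N = (\<lambda>a. (\<Sum>t\<in>{t\<in>A. g t = a}. w t))"
  define ng where "ng = (\<lambda>(a::'k\<Rightarrow>int) j. - a j)"
  have ngng: "ng (ng a) = a" for a by (simp add: ng_def)
  have img: "ng ` W = W"
  proof
    show "ng ` W \<subseteq> W" using Wsym unfolding ng_def .
    show "W \<subseteq> ng ` W"
    proof
      fix a assume "a \<in> W"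
      then have "ng a \<in> W" using Wsym unfolding ng_def by blast
      then show "a \<in> ng ` W" using ngng[of a] by (metis image_eqI)
    qed
  qed
  have injng: "inj_on ng W" by (metis inj_on_inverseI ngng)
  have 1: "(\<Sum>t\<in>A. of_int (w t) * G (L (g t))) = (\<Sum>a\<in>W. of_int (N a) * G (L a))"
  proof -
    have "(\<Sum>t\<in>A. of_int (w t) * G (L (g t))) = (\<Sum>a\<in>W. \<Sum>t\<in>{t\<in>A. g t = a}. of_int (w t) * G (L (g t)))"
      using sum.group[OF fA fW gA, of "\<lambda>t. of_int (w t) * G (L (g t))"] by simp
    also have "\<dots> = (\<Sum>a\<in>W. of_int (N a) * G (L a))"
      unfolding N_def of_int_sum sum_distrib_right
      by (intro sum.cong refl) auto
    finally show ?thesis .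
  qed
  have 2: "(\<Sum>a\<in>W. of_int (N (ng a)) * G (L a)) = - (\<Sum>a\<in>W. of_int (N a) * G (L a))"
  proof -
    have "(\<Sum>a\<in>W. of_int (N a) * G (L a)) = (\<Sum>a\<in>ng ` W. of_int (N a) * G (L a))" using img by simp
    also have "\<dots> = (\<Sum>a\<in>W. of_int (N (ng a)) * G (L (ng a)))"
      by (subst sum.reindex[OF injng]) simp
    also have "\<dots> = - (\<Sum>a\<in>W. of_int (N (ng a)) * G (L a))"
      using Godd Lodd by (simp add: ng_def sum_negf[symmetric])
    finally show ?thesis by simp
  qed
  have "(\<Sum>a\<in>W. of_int ((\<Sum>t\<in>{t\<in>A. g t = a}. w t) - (\<Sum>t\<in>{t\<in>A. g t = (\<lambda>j. - a j)}. w t)) * G (L a))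
     = (\<Sum>a\<in>W. of_int (N a) * G (L a) - of_int (N (ng a)) * G (L a))"
    unfolding N_def ng_def of_int_diff left_diff_distrib by (rule refl)
  also have "\<dots> = (\<Sum>a\<in>W. of_int (N a) * G (L a)) - (\<Sum>a\<in>W. of_int (N (ng a)) * G (L a))"
    by (rule sum_subtractf)
  finally show ?thesis using 1 2 by linarith
qed



lemma necessity:
  fixes K :: "nat set \<Rightarrow> 'k \<Rightarrow> int" and Ks :: "'k set"
  assumes fFc: "finite Fc" and fT: "finite T" and fK: "finite Ks" and KB: "\<forall>f\<in>Fc. K f \<in> Bcol Ks"
    and part: "is_partition P T"
    and inv: "\<forall>F\<in>gW T P. gop Fc T c F ` gsync Fc K \<subseteq> gsync Fc K"
  shows "gbal Fc c K P"
proof -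
  define ng where "ng = (\<lambda>(a::'k\<Rightarrow>int) j. - a j)"
  define S where "S = gcol Fc c K ` T \<union> ng ` gcol Fc c K ` T \<union> {\<lambda>j. 0}"
  have fS: "finite S" unfolding S_def using fT by simp
  have suppS: "\<forall>a\<in>S. \<forall>j. j \<notin> Ks \<longrightarrow> a j = 0"
  proof -
    have "gcol Fc c K t j = 0" if "j \<notin> Ks" for t j
      unfolding gcol_def by (intro sum.neutral ballI) (metis KB Bcol_supp that mult_zero_right)
    then show ?thesis unfolding S_def ng_def by auto
  qed
  obtain y :: "'k \<Rightarrow> real" where y: "\<forall>a\<in>S. \<forall>b\<in>S.
     (\<Sum>j\<in>Ks. of_int (a j) * y j) = (\<Sum>j\<in>Ks. of_int (b j) * y j) \<longrightarrow> a = b"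
    using exists_sep[OF fK fS suppS] by blast
  define L where "L = (\<lambda>a. \<Sum>j\<in>Ks. of_int (a j) * y j)"
  have Linj: "\<And>a b. a \<in> S \<Longrightarrow> b \<in> S \<Longrightarrow> L a = L b \<Longrightarrow> a = b" using y unfolding L_def by blast
  have Lneg: "L (ng a) = - L a" for a unfolding L_def ng_def by (simp add: sum_negf[symmetric])
  have L0: "L (\<lambda>j. 0) = 0" unfolding L_def by simp
  define x where "x = (\<lambda>f. if f \<in> Fc then L (K f) else 0)"
  have xs: "x \<in> gsync Fc K"
    unfolding gsync_def x_def using Lneg unfolding ng_def by auto
  have Bx: "(\<Sum>f\<in>Fc. of_int (c f t) * x f) = L (gcol Fc c K t)" for t
    using lin[where Fc=Fc and x=x and Ks=Ks and K=K and y=y and c=c and t=t] unfolding L_def x_def by simp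
  have PT: "A \<subseteq> T" if "A \<in> P" for A using part that unfolding is_partition_def by blast
  have disj: "A \<inter> B = {}" if "A \<in> P" "B \<in> P" "A \<noteq> B" for A B
    using part that unfolding is_partition_def by blast
  have zeroW: "(\<lambda>t u. 0) \<in> gW T P" unfolding gW_def by simp
  have key: "\<exists>F\<in>gW T P. \<forall>e\<in>Fc. gop Fc T c F x e = of_int (gcnt Fc c K A a e)" if AP: "A \<in> P" for A a
  proof (cases "a \<noteq> (\<lambda>j. 0) \<and> (a \<in> gcol Fc c K ` A \<or> ng a \<in> gcol Fc c K ` A)")
    case False
    note nF = this
    have "gcnt Fc c K A a e = 0" for e
    proof (cases "a = (\<lambda>j. 0)")
      case True then show ?thesis unfolding gcnt_def by simp
    next
      case False
      with nF have "a \<notin> gcol Fc c K ` A" "ng a \<notin> gcol Fc c K ` A" by auto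
      then have E1: "{t\<in>A. gcol Fc c K t = a} = {}" and E2: "{t\<in>A. gcol Fc c K t = (\<lambda>j. - a j)} = {}"
        unfolding ng_def by (auto simp: image_iff)
      show ?thesis unfolding gcnt_def E1 E2 by simp
    qed
    then show ?thesis using zeroW by (intro bexI[of _ "\<lambda>t u. 0"]) (auto simp: gop_def)
  next
    case True
    have aS: "a \<in> S" and naS: "ng a \<in> S"
    proof -
      have nn: "ng (ng a) = a" unfolding ng_def by simp
      from True PT[OF AP] have "a \<in> gcol Fc c K ` T \<or> ng a \<in> gcol Fc c K ` T" by blast
      then show "a \<in> S" "ng a \<in> S" unfolding S_def using nn by (metis UnI1 UnI2 image_eqI)+
    qed
    have anz: "a \<noteq> (\<lambda>j. 0)" using True by blast
    define lam where "lam = L a"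
    have lnz: "lam \<noteq> 0"
    proof
      assume "lam = 0"
      then have "L a = L (\<lambda>j. 0)" using L0 lam_def by simp
      then have "a = (\<lambda>j. 0)" using Linj[OF aS] unfolding S_def by blast
      then show False using anz by simp
    qed
    have ana: "ng a \<noteq> a"
    proof
      assume "ng a = a"
      then have "L a = - L a" using Lneg by metis
      then show False using lnz lam_def by simp
    qed
    define G where "G = (\<lambda>u::real. if u = lam then 1 else if u = - lam then -1 else (0::real))"
    define F where "F = (\<lambda>t. if t \<in> A then G else (\<lambda>u. 0))"
    have FW: "F \<in> gW T P"
    proof -
      have Godd: "G (- u) = - G u" for u using lnz unfolding G_def by auto
      have Fodd: "F s (- u) = - F s u" for s u unfolding F_def using Godd by simp
      have Fcl: "F s = F t" if "B \<in> P" "s \<in> B" "t \<in> B" for B s t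
      proof -
        have "s \<in> A \<longleftrightarrow> t \<in> A"
        proof (cases "A = B")
          case True then show ?thesis using that by simp
        next
          case False
          then have "A \<inter> B = {}" using disj[OF AP that(1)] by simp
          then show ?thesis using that by blast
        qed
        then show ?thesis unfolding F_def by simp
      qed
      show ?thesis unfolding gW_def using Fodd Fcl by blast
    qed
    have gval: "G (L (gcol Fc c K t)) = (if gcol Fc c K t = a then 1 else if gcol Fc c K t = ng a then -1 else 0)"
      if "t \<in> A" for t
    proof -
      have gS: "gcol Fc c K t \<in> S" using that PT[OF AP] unfolding S_def by blast
      have e1: "L (gcol Fc c K t) = lam \<longleftrightarrow> gcol Fc c K t = a"
        using Linj[OF gS aS] lam_def by auto
      have e2: "L (gcol Fc c K t) = - lam \<longleftrightarrow> gcol Fc c K t = ng a"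
        using Linj[OF gS naS] lam_def Lneg[of a] by auto
      show ?thesis unfolding G_def using e1 e2 lnz by auto
    qed
    have "gop Fc T c F x e = of_int (gcnt Fc c K A a e)" if eF: "e \<in> Fc" for e
    proof -
      have "gop Fc T c F x e = (\<Sum>t\<in>T. of_int (c e t) * F t (L (gcol Fc c K t)))"
        unfolding gop_def using eF Bx by simp
      also have "\<dots> = (\<Sum>t\<in>A. of_int (c e t) * F t (L (gcol Fc c K t)))"
        by (rule sum.mono_neutral_right[OF fT PT[OF AP]]) (auto simp: F_def)
      also have "\<dots> = (\<Sum>t\<in>A. (if gcol Fc c K t = a then of_int (c e t) else 0)
                              - (if gcol Fc c K t = ng a then of_int (c e t) else 0))"
        by (rule sum.cong[OF refl]) (use gval ana in \<open>auto simp: F_def\<close>)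
      also have "\<dots> = of_int (gcnt Fc c K A a e)"
      proof -
        have fA: "finite A" using finite_subset[OF PT[OF AP] fT] .
        show ?thesis unfolding gcnt_def sum_subtractf of_int_diff of_int_sum
          using sum.inter_filter[OF fA, of "\<lambda>t. real_of_int (c e t)" "\<lambda>t. gcol Fc c K t = a"]
                sum.inter_filter[OF fA, of "\<lambda>t. real_of_int (c e t)" "\<lambda>t. gcol Fc c K t = ng a"]
          unfolding ng_def by simp
      qed
      finally show ?thesis .
    qed
    then show ?thesis using FW by blast
  qed
  show ?thesis unfolding gbal_def
  proof (intro ballI allI conjI impI)
    fix e f A a assume ef: "e \<in> Fc" "f \<in> Fc" and AP: "A \<in> P"
    obtain F where FW: "F \<in> gW T P" and Fe: "\<forall>e\<in>Fc. gop Fc T c F x e = of_int (gcnt Fc c K A a e)"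
      using key[OF AP] by blast
    have "gop Fc T c F x \<in> gsync Fc K" using inv FW xs by blast
    then have i1: "K e = K f \<Longrightarrow> gop Fc T c F x e = gop Fc T c F x f"
      and i2: "K e = (\<lambda>j. - K f j) \<Longrightarrow> gop Fc T c F x e = - gop Fc T c F x f"
      unfolding gsync_def using ef by blast+
    show "K e = K f \<Longrightarrow> gcnt Fc c K A a e = gcnt Fc c K A a f"
      using i1 Fe ef by simp
    show "K e = (\<lambda>j. - K f j) \<Longrightarrow> gcnt Fc c K A a e = - gcnt Fc c K A a f"
      using i2 Fe ef by simp
  qed
qed



lemma sufficiency:
  fixes K :: "nat set \<Rightarrow> 'k \<Rightarrow> int" and Ks :: "'k set"
  assumes fFc: "finite Fc" and fT: "finite T" and fK: "finite Ks" and KB: "\<forall>f\<in>Fc. K f \<in> Bcol Ks"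
    and part: "is_partition P T"
    and bal: "gbal Fc c K P" and FW: "F \<in> gW T P" and xs: "x \<in> gsync Fc K"
  shows "gop Fc T c F x \<in> gsync Fc K"
proof -
  obtain y where y: "\<forall>f\<in>Fc. x f = (\<Sum>j\<in>Ks. of_int (K f j) * y j)" using rep[OF xs KB fK] by blast
  define L where "L = (\<lambda>a. \<Sum>j\<in>Ks. of_int (a j) * y j)"
  have Lneg: "\<forall>a. L (\<lambda>j. - a j) = - L a" unfolding L_def by (simp add: sum_negf[symmetric])
  have Bx: "(\<Sum>f\<in>Fc. of_int (c f t) * x f) = L (gcol Fc c K t)" for t
    using lin[OF y, where c=c and t=t] unfolding L_def by simp
  define W where "W = gcol Fc c K ` T \<union> (\<lambda>a j. - a j) ` gcol Fc c K ` T"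
  have fW: "finite W" unfolding W_def using fT by simp
  have Wsym: "(\<lambda>a j. - a j) ` W \<subseteq> W" unfolding W_def by auto
  have PT: "A \<subseteq> T" if "A \<in> P" for A using part that unfolding is_partition_def by blast
  have Pne: "A \<noteq> {}" if "A \<in> P" for A using part that unfolding is_partition_def by blast
  have disj: "\<forall>A\<in>P. \<forall>B\<in>P. A \<noteq> B \<longrightarrow> A \<inter> B = {}" using part unfolding is_partition_def by blast
  have UP: "\<Union>P = T" using part unfolding is_partition_def by blast
  have fP: "finite P" using finite_UnionD[of P] fT UP by simp
  have fA: "\<forall>A\<in>P. finite A"
  proof
    fix A assume AP: "A \<in> P"
    show "finite A" by (rule finite_subset[OF PT[OF AP] fT])
  qed
  define R where "R = (\<lambda>A. F (SOME t. t \<in> A))"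
  have FW': "(\<forall>s\<in>T. \<forall>u. F s (- u) = - F s u) \<and> (\<forall>A\<in>P. \<forall>s\<in>A. \<forall>t\<in>A. F s = F t)"
    using FW unfolding gW_def by (rule CollectD)
  have Fodd: "\<forall>s\<in>T. \<forall>u. F s (- u) = - F s u" using FW' by (rule conjunct1)
  have Fcl: "\<forall>A\<in>P. \<forall>s\<in>A. \<forall>t\<in>A. F s = F t" using FW' by (rule conjunct2)
  have RA: "F t = R A" if "A \<in> P" "t \<in> A" for A t
  proof -
    have "(SOME t. t \<in> A) \<in> A" using Pne[OF that(1)] by (simp add: some_in_eq)
    then show ?thesis unfolding R_def using Fcl that by blast
  qed
  have Rodd: "\<forall>u. R A (- u) = - R A u" if "A \<in> P" for A
  proof -
    have "(SOME t. t \<in> A) \<in> A" using Pne[OF that] by (simp add: some_in_eq)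
    then show ?thesis unfolding R_def using Fodd PT[OF that] by blast
  qed
  have key: "2 * gop Fc T c F x e = (\<Sum>A\<in>P. \<Sum>a\<in>W. of_int (gcnt Fc c K A a e) * R A (L a))"
    if eF: "e \<in> Fc" for e
  proof -
    have "gop Fc T c F x e = (\<Sum>t\<in>T. of_int (c e t) * F t (L (gcol Fc c K t)))"
      unfolding gop_def using eF Bx by simp
    also have "\<dots> = (\<Sum>A\<in>P. \<Sum>t\<in>A. of_int (c e t) * F t (L (gcol Fc c K t)))"
      unfolding UP[symmetric] using sum.Union_disjoint[OF fA disj] by (simp add: o_def)
    also have "\<dots> = (\<Sum>A\<in>P. \<Sum>t\<in>A. of_int (c e t) * R A (L (gcol Fc c K t)))"
      by (intro sum.cong refl) (simp add: RA)
    finally have "2 * gop Fc T c F x e = (\<Sum>A\<in>P. 2 * (\<Sum>t\<in>A. of_int (c e t) * R A (L (gcol Fc c K t))))"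
      by (simp add: sum_distrib_left)
    also have "\<dots> = (\<Sum>A\<in>P. \<Sum>a\<in>W. of_int (gcnt Fc c K A a e) * R A (L a))"
    proof (rule sum.cong[OF refl])
      fix A assume AP: "A \<in> P"
      have gA: "gcol Fc c K ` A \<subseteq> W" using PT[OF AP] unfolding W_def by blast
      show "2 * (\<Sum>t\<in>A. of_int (c e t) * R A (L (gcol Fc c K t))) = (\<Sum>a\<in>W. of_int (gcnt Fc c K A a e) * R A (L a))"
        unfolding gcnt_def
        using sym_sum[where A=A and W=W and g="gcol Fc c K" and G="R A" and L=L and w="c e"] fA AP fW gA Wsym Rodd[OF AP] Lneg by simp
    qed
    finally show ?thesis .
  qed
  have z: "\<forall>s. s \<notin> Fc \<longrightarrow> gop Fc T c F x s = 0" by (simp add: gop_def)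
  have e1: "gop Fc T c F x s = gop Fc T c F x t" if st: "s \<in> Fc" "t \<in> Fc" and Kst: "K s = K t" for s t
  proof -
    have "2 * gop Fc T c F x s = 2 * gop Fc T c F x t"
      unfolding key[OF st(1)] key[OF st(2)]
    proof (intro sum.cong refl)
      fix A a assume "A \<in> P"
      then have "gcnt Fc c K A a s = gcnt Fc c K A a t" using bal st Kst unfolding gbal_def by blast
      then show "of_int (gcnt Fc c K A a s) * R A (L a) = of_int (gcnt Fc c K A a t) * R A (L a)" by simp
    qed
    then show ?thesis by simp
  qed
  have e2: "gop Fc T c F x s = - gop Fc T c F x t" if st: "s \<in> Fc" "t \<in> Fc" and Kst: "K s = (\<lambda>j. - K t j)" for s t
  proof -
    have "2 * gop Fc T c F x s = (\<Sum>A\<in>P. \<Sum>a\<in>W. - (of_int (gcnt Fc c K A a t) * R A (L a)))"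
      unfolding key[OF st(1)]
    proof (intro sum.cong refl)
      fix A a assume "A \<in> P"
      then have "gcnt Fc c K A a s = - gcnt Fc c K A a t" using bal st Kst unfolding gbal_def by blast
      then show "of_int (gcnt Fc c K A a s) * R A (L a) = - (of_int (gcnt Fc c K A a t) * R A (L a))" by simp
    qed
    also have "\<dots> = - (2 * gop Fc T c F x t)"
      unfolding key[OF st(2)] by (simp add: sum_negf)
    finally show ?thesis by simp
  qed
  show ?thesis unfolding gsync_def using z e1 e2 by blast
qed

lemma generic:
  fixes K :: "nat set \<Rightarrow> 'k \<Rightarrow> int" and Ks :: "'k set"
  assumes fFc: "finite Fc" and fT: "finite T" and fK: "finite Ks" and KB: "\<forall>f\<in>Fc. K f \<in> Bcol Ks"
    and part: "is_partition P T"
  shows "(\<forall>F\<in>gW T P. gop Fc T c F ` gsync Fc K \<subseteq> gsync Fc K) \<longleftrightarrow> gbal Fc c K P"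
  using necessity[OF assms] sufficiency[OF assms] by blast

lemma finite_faces: "simplicial_complex n X \<Longrightarrow> finite (faces X k)"
proof -
  assume "simplicial_complex n X"
  then have "X \<subseteq> Pow {1..n}" unfolding simplicial_complex_def by blast
  then have "finite X" using finite_subset by blast
  then show ?thesis unfolding faces_def by simp
qed

theorem mainTheorem4:
  fixes n d :: nat and X :: "nat set set" and Ks :: "'k set"
    and K :: "nat set \<Rightarrow> 'k \<Rightarrow> int" and P Q :: "nat set set set"
  assumes "simplicial_complex n X"
    and "finite Ks"
    and "anti_coloring X (d + 1) Ks K"
    and "is_partition P (faces X (d + 2))"
    and "is_partition Q (faces X d)"
  shows "((\<forall>F\<in>W_maps X (d + 2) P. invariant (anti_sync X (d + 1) K) (up_op X (d + 1) F))
            \<longleftrightarrow> up_balanced X (d + 1) K P)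
       \<and> ((\<forall>H\<in>W_maps X d Q. invariant (anti_sync X (d + 1) K) (down_op X (d + 1) H))
            \<longleftrightarrow> down_balanced X (d + 1) K Q)"
proof -
  have fF: "finite (faces X k)" for k using finite_faces[OF assms(1)] .
  have KB: "\<forall>f\<in>faces X (d+1). K f \<in> Bcol Ks" using assms(3) unfolding anti_coloring_def by blast
  have AS: "anti_sync X (d + 1) K = gsync (faces X (d+1)) K"
    unfolding anti_sync_def chains_def gsync_def by auto
  have WM: "W_maps X k P = gW (faces X k) P" for k P unfolding W_maps_def gW_def by simp
  have UO: "up_op X (d+1) F = gop (faces X (d+1)) (faces X (d+2)) (\<lambda>e t. incid t e) F" for F
  proof -
    have e2: "Suc (d + 1) = d + 2" by simp
    show ?thesis unfolding up_op_def gop_def by (simp only: e2)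
  qed
  have DO: "down_op X (d+1) F = gop (faces X (d+1)) (faces X d) (\<lambda>e t. incid e t) F" for F
  proof -
    have e1: "d + 1 - 1 = d" by simp
    show ?thesis unfolding down_op_def gop_def by (simp only: e1)
  qed
  have CU: "col_up X (d+1) K = gcol (faces X (d+1)) (\<lambda>e t. incid t e) K"
    unfolding col_up_def gcol_def by simp
  have CD: "col_down X (d+1) K = gcol (faces X (d+1)) (\<lambda>e t. incid e t) K"
    unfolding col_down_def gcol_def by simp
  have UB: "up_balanced X (d+1) K P = gbal (faces X (d+1)) (\<lambda>e t. incid t e) K P"
    unfolding up_balanced_def gbal_def U_cnt_def gcnt_def CU by simp
  have DB: "down_balanced X (d+1) K Q = gbal (faces X (d+1)) (\<lambda>e t. incid e t) K Q"
    unfolding down_balanced_def gbal_def D_cnt_def gcnt_def CD by simp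
  show ?thesis
    unfolding AS WM UO DO UB DB invariant_def
    using generic[OF fF fF assms(2) KB assms(4)] generic[OF fF fF assms(2) KB assms(5)]
    by blast
qed

end
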